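(* Let $G=(V,E,\ell,\Phi)$ be a strongly connected trackable weak model. If $(x_1,\dots,x_t)$ and $(x'_1,\dots,x'_t)$ are walks in $G$ with $x_1=x'_1$, $x_t=x'_t$ and $\ell(x_i)=\ell(x'_i)$ for all $1\le i\le t$, then $x_i=x'_i$ for all $1\le i\le t$. Equivalently, when observations start from a known node, at most one hypothesis (as a walk up to time $t$) visits a given node at a given time $t$.
   Context: A (single-colored) weak model $G=(V,E,\ell,\Phi)$ consists of a finite set of nodes $V$, directed edges $E\subseteq V\times V$, a finite color set $\Phi$ and a coloring $\ell:V\to\Phi$. A walk of length $t$ is a node sequence $(x_1,\dots,x_t)$ with $(x_i,x_{i+1})\in E$. For $Y_{[t]}\in\Phi^t$, a hypothesis is a walk $(x_1,\dots,x_t)$ with $\ell(x_i)=Y_i$ for all $i$; $\mathcal H_G(Y_{[t]})$ is the set of hypotheses and $n_G(t)=\max_{Y_{[t]}}|\mathcal H_G(Y_{[t]})|$. $G$ is trackable if $n_G(t)=O(t^k)$ for some $k\ge0$, and strongly connected if every node is reachable from every node by a directed path. *)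

theory Defs
  imports Main "HOL-Library.Landau_Symbols"
begin

definition weak_model :: "'v set \<Rightarrow> ('v \<times> 'v) set \<Rightarrow> ('v \<Rightarrow> 'c) \<Rightarrow> 'c set \<Rightarrow> bool" where
  "weak_model V E l Phi \<longleftrightarrow> finite V \<and> E \<subseteq> V \<times> V \<and> finite Phi \<and> l ` V \<subseteq> Phi"

definition is_walk :: "'v set \<Rightarrow> ('v \<times> 'v) set \<Rightarrow> 'v list \<Rightarrow> bool" where
  "is_walk V E xs \<longleftrightarrow> set xs \<subseteq> V \<and> (\<forall>i. Suc i < length xs \<longrightarrow> (xs ! i, xs ! Suc i) \<in> E)"

definition hypotheses :: "'v set \<Rightarrow> ('v \<times> 'v) set \<Rightarrow> ('v \<Rightarrow> 'c) \<Rightarrow> 'c list \<Rightarrow> 'v list set" where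
  "hypotheses V E l Y = {xs. is_walk V E xs \<and> length xs = length Y \<and> map l xs = Y}"

definition n_G :: "'v set \<Rightarrow> ('v \<times> 'v) set \<Rightarrow> ('v \<Rightarrow> 'c) \<Rightarrow> 'c set \<Rightarrow> nat \<Rightarrow> nat" where
  "n_G V E l Phi t = Max ((\<lambda>Y. card (hypotheses V E l Y)) ` {Y. set Y \<subseteq> Phi \<and> length Y = t})"

definition trackable :: "'v set \<Rightarrow> ('v \<times> 'v) set \<Rightarrow> ('v \<Rightarrow> 'c) \<Rightarrow> 'c set \<Rightarrow> bool" where
  "trackable V E l Phi \<longleftrightarrow> (\<exists>k::nat. (\<lambda>t. real (n_G V E l Phi t)) \<in> O(\<lambda>t. real t ^ k))"

definition strongly_connected :: "'v set \<Rightarrow> ('v \<times> 'v) set \<Rightarrow> bool" where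
  "strongly_connected V E \<longleftrightarrow> (\<forall>x\<in>V. \<forall>y\<in>V. (x, y) \<in> E\<^sup>*)"

end

theory Submission
  imports Defs
begin

lemma is_walk_Cons:
  "is_walk V E (x # xs) \<longleftrightarrow> x \<in> V \<and> is_walk V E xs \<and> (xs \<noteq> [] \<longrightarrow> (x, hd xs) \<in> E)"
proof
  assume h: "is_walk V E (x # xs)"
  have "\<forall>i. Suc i < length xs \<longrightarrow> (xs ! i, xs ! Suc i) \<in> E"
  proof (intro allI impI)
    fix i assume "Suc i < length xs"
    with h have "((x#xs) ! Suc i, (x#xs) ! Suc (Suc i)) \<in> E" unfolding is_walk_def by auto
    then show "(xs ! i, xs ! Suc i) \<in> E" by simp
  qed
  moreover have "xs \<noteq> [] \<longrightarrow> (x, hd xs) \<in> E"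
  proof
    assume "xs \<noteq> []"
    with h have "((x#xs) ! 0, (x#xs) ! Suc 0) \<in> E" unfolding is_walk_def by auto
    then show "(x, hd xs) \<in> E" using \<open>xs \<noteq> []\<close> by (simp add: hd_conv_nth)
  qed
  ultimately show "x \<in> V \<and> is_walk V E xs \<and> (xs \<noteq> [] \<longrightarrow> (x, hd xs) \<in> E)"
    using h unfolding is_walk_def by auto
next
  assume h: "x \<in> V \<and> is_walk V E xs \<and> (xs \<noteq> [] \<longrightarrow> (x, hd xs) \<in> E)"
  show "is_walk V E (x # xs)" unfolding is_walk_def
  proof (intro conjI allI impI)
    show "set (x # xs) \<subseteq> V" using h unfolding is_walk_def by auto
  next
    fix i assume i: "Suc i < length (x # xs)"
    show "((x # xs) ! i, (x # xs) ! Suc i) \<in> E"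
    proof (cases i)
      case 0 then show ?thesis using h i by (auto simp: hd_conv_nth)
    next
      case (Suc j) then show ?thesis using h i unfolding is_walk_def by auto
    qed
  qed
qed

lemma is_walk_Nil[simp]: "is_walk V E []" unfolding is_walk_def by auto

lemma is_walk_append:
  "is_walk V E (p @ q) \<longleftrightarrow> is_walk V E p \<and> is_walk V E q \<and> (p \<noteq> [] \<and> q \<noteq> [] \<longrightarrow> (last p, hd q) \<in> E)"
  by (induction p) (auto simp: is_walk_Cons)

lemma is_walk_glue:
  assumes "is_walk V E p" "is_walk V E q" "p \<noteq> []" "q \<noteq> []" "last p = hd q"
  shows "is_walk V E (p @ tl q)"
proof -
  obtain y r where q: "q = y # r" using assms(4) by (cases q) auto
  have "is_walk V E r" using assms(2) q by (simp add: is_walk_Cons)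
  moreover have "r \<noteq> [] \<longrightarrow> (last p, hd r) \<in> E" using assms(2,5) q by (simp add: is_walk_Cons)
  ultimately show ?thesis using assms(1) q by (simp add: is_walk_append)
qed

lemma path_exists:
  assumes "(x, y) \<in> E\<^sup>*" "x \<in> V" "E \<subseteq> V \<times> V"
  shows "\<exists>q. q \<noteq> [] \<and> hd q = x \<and> last q = y \<and> is_walk V E q"
  using assms(1)
proof (induction rule: rtrancl_induct)
  case base
  then show ?case using assms(2) by (intro exI[of _ "[x]"]) (simp add: is_walk_Cons)
next
  case (step y z)
  then obtain q where q: "q \<noteq> []" "hd q = x" "last q = y" "is_walk V E q" by blast
  have "is_walk V E [z]" using step(2) assms(3) by (auto simp: is_walk_Cons)
  then have "is_walk V E (q @ [z])" using q step(2) by (simp add: is_walk_append)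
  then show ?case using q by (intro exI[of _ "q @ [z]"]) simp
qed

fun Wk :: "'v list \<Rightarrow> 'v list \<Rightarrow> 'v \<Rightarrow> bool list \<Rightarrow> 'v list" where
  "Wk D1 D0 a [] = [a]"
| "Wk D1 D0 a (b # bs) = (if b then D1 else D0) @ tl (Wk D1 D0 a bs)"

lemma exp_beats_poly:
  fixes f :: "nat \<Rightarrow> real"
  assumes "f \<in> O(\<lambda>t. real t ^ d)" "L > 0" "\<And>k. 2 ^ k \<le> f (k * L + 1)"
  shows False
proof -
  obtain c where c: "c > 0" "eventually (\<lambda>x. norm (f x) \<le> c * norm (real x ^ d)) sequentially"
    using assms(1) unfolding bigo_def by auto
  then obtain N where N: "\<And>n. n \<ge> N \<Longrightarrow> norm (f n) \<le> c * norm (real n ^ d)"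
    by (auto simp: eventually_sequentially)
  have lim: "(\<lambda>k::nat. (real k * real L + 1)^d / 2^k) \<longlonglongrightarrow> 0"
  proof -
    define M where "M = ((real L + 1) / ln 2) ^ d"
    have h1: "((\<lambda>x::real. x ^ d / exp x) \<longlongrightarrow> 0) at_top" by (rule tendsto_power_div_exp_0)
    have h2: "filterlim (\<lambda>k::nat. ln 2 * real k) at_top sequentially"
      by (rule filterlim_tendsto_pos_mult_at_top[OF tendsto_const _ filterlim_real_sequentially]) simp
    have h3: "(\<lambda>k::nat. (ln 2 * real k) ^ d / exp (ln 2 * real k)) \<longlonglongrightarrow> 0"
      using filterlim_compose[OF h1 h2] by (simp add: o_def)
    have ex: "exp (ln 2 * real k) = 2 ^ k" for k :: nat
      by (metis exp_ln exp_of_nat_mult mult.commute zero_less_numeral)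
    have h4: "(\<lambda>k::nat. M * ((ln 2 * real k) ^ d / 2 ^ k)) \<longlonglongrightarrow> 0"
      using tendsto_mult_right_zero[OF h3, of M] by (simp add: ex)
    have bnd: "(real k * real L + 1)^d / 2^k \<le> M * ((ln 2 * real k) ^ d / 2 ^ k)" if "k \<ge> 1" for k :: nat
    proof -
      have "real k * real L + 1 \<le> (real L + 1) / ln 2 * (ln 2 * real k)"
        using that by (simp add: field_simps)
      then have "(real k * real L + 1)^d \<le> ((real L + 1) / ln 2 * (ln 2 * real k)) ^ d"
        by (rule power_mono) simp
      also have "\<dots> = M * (ln 2 * real k) ^ d" by (simp only: M_def power_mult_distrib)
      finally show ?thesis by (simp add: divide_right_mono)
    qed
    show ?thesis
    proof (rule tendsto_sandwich[OF _ _ tendsto_const h4])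
      show "eventually (\<lambda>k. 0 \<le> (real k * real L + 1)^d / 2^k) sequentially" by simp
      show "eventually (\<lambda>k. (real k * real L + 1)^d / 2^k \<le> M * ((ln 2 * real k) ^ d / 2 ^ k)) sequentially"
        using eventually_ge_at_top[of 1] by (rule eventually_mono) (rule bnd)
    qed
  qed
  have "eventually (\<lambda>k. (real k * real L + 1)^d / 2^k < 1 / c) sequentially"
    using order_tendstoD(2)[OF lim] c(1) by auto
  moreover have "eventually (\<lambda>k::nat. k \<ge> N) sequentially" by (rule eventually_ge_at_top)
  ultimately have "eventually (\<lambda>k. (real k * real L + 1)^d / 2^k < 1 / c \<and> k \<ge> N) sequentially"
    by (rule eventually_conj)
  then obtain K where K: "\<And>n. n \<ge> K \<Longrightarrow> (real n * real L + 1)^d / 2^n < 1 / c \<and> n \<ge> N"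
    unfolding eventually_sequentially by blast
  define k where "k = K"
  have k1: "(real k * real L + 1)^d / 2^k < 1 / c" and k2: "k \<ge> N" using K[of K] unfolding k_def by auto
  have "k * L + 1 \<ge> N" proof -
    have "k \<le> k * L" using assms(2) by simp
    then show ?thesis using k2 by linarith
  qed
  then have "norm (f (k*L+1)) \<le> c * norm (real (k*L+1) ^ d)" by (rule N)
  moreover have "norm (real (k*L+1) ^ d) = (real k * real L + 1)^d" by (simp add: add.commute)
  moreover have "f (k*L+1) \<le> norm (f (k*L+1))" by simp
  ultimately have "2 ^ k \<le> c * (real k * real L + 1) ^ d" using assms(3)[of k] by (metis order_trans)
  moreover have "(real k * real L + 1)^d < 2^k / c" using k1 c(1) by (simp add: field_simps)
  ultimately show False using c(1) by (simp add: field_simps)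
qed


lemma Wk_props:
  assumes "is_walk V E D1" "is_walk V E D0" "D1 \<noteq> []" "D0 \<noteq> []"
    "hd D1 = a" "hd D0 = a" "last D1 = a" "last D0 = a" "a \<in> V"
  shows "Wk D1 D0 a bs \<noteq> [] \<and> hd (Wk D1 D0 a bs) = a \<and> last (Wk D1 D0 a bs) = a \<and> is_walk V E (Wk D1 D0 a bs)"
proof (induction bs)
  case Nil
  then show ?case using assms(9) by (simp add: is_walk_Cons)
next
  case (Cons b bs)
  let ?D = "if b then D1 else D0"
  have D: "is_walk V E ?D" "?D \<noteq> []" "hd ?D = a" "last ?D = a" using assms by auto
  have "last (?D @ tl (Wk D1 D0 a bs)) = a"
  proof (cases "tl (Wk D1 D0 a bs) = []")
    case True then show ?thesis using D by simp
  next
    case False then show ?thesis using Cons by (simp add: last_tl)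
  qed
  moreover have "is_walk V E (?D @ tl (Wk D1 D0 a bs))"
    using is_walk_glue[of V E ?D "Wk D1 D0 a bs"] D Cons by simp
  ultimately show ?case using D by simp
qed

lemma Wk_length:
  assumes "length D1 = Suc Ld" "length D0 = Suc Ld" "\<And>bs. Wk D1 D0 a bs \<noteq> []"
  shows "length (Wk D1 D0 a bs) = length bs * Ld + 1"
proof (induction bs)
  case Nil then show ?case by simp
next
  case (Cons b bs)
  have "Wk D1 D0 a bs \<noteq> []" by (rule assms(3))
  then show ?case using Cons assms(1,2) by simp
qed

lemma Wk_map:
  assumes "map l D1 = map l D0"
  shows "map l (Wk D1 D0 a bs) = map l (Wk D1 D0 a (replicate (length bs) True))"
  by (induction bs) (use assms in \<open>auto simp: map_tl\<close>)

lemma Wk_inj: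
  assumes "length D1 = length D0" "D1 \<noteq> D0"
    "\<And>bs. Wk D1 D0 a bs \<noteq> [] \<and> hd (Wk D1 D0 a bs) = a"
  shows "length bs = length cs \<Longrightarrow> Wk D1 D0 a bs = Wk D1 D0 a cs \<Longrightarrow> bs = cs"
proof (induction bs arbitrary: cs)
  case Nil then show ?case by simp
next
  case (Cons b bs)
  then obtain c cs' where cs: "cs = c # cs'" by (cases cs) auto
  let ?Db = "if b then D1 else D0" and ?Dc = "if c then D1 else D0"
  have eq: "?Db @ tl (Wk D1 D0 a bs) = ?Dc @ tl (Wk D1 D0 a cs')" using Cons.prems cs by simp
  have len: "length ?Db = length ?Dc" using assms(1) by simp
  have "?Db = ?Dc" using eq len by (simp add: append_eq_append_conv)
  then have bc: "b = c" using assms(2) by (auto split: if_splits)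
  have "tl (Wk D1 D0 a bs) = tl (Wk D1 D0 a cs')" using eq len by (simp add: append_eq_append_conv)
  moreover have "Wk D1 D0 a bs \<noteq> []" "hd (Wk D1 D0 a bs) = a"
     "Wk D1 D0 a cs' \<noteq> []" "hd (Wk D1 D0 a cs') = a" using assms(3) by auto
  ultimately have "Wk D1 D0 a bs = Wk D1 D0 a cs'" by (metis list.collapse)
  then have "bs = cs'" using Cons cs by simp
  then show ?case using bc cs by simp
qed

theorem corollary2:
  fixes V :: "'v set" and E :: "('v \<times> 'v) set" and l :: "'v \<Rightarrow> 'c" and Phi :: "'c set"
    and xs ys :: "'v list"
  assumes "weak_model V E l Phi"
    and "strongly_connected V E"
    and "trackable V E l Phi"
    and "is_walk V E xs" and "is_walk V E ys"
    and "length xs = length ys" and "xs \<noteq> []"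
    and "hd xs = hd ys" and "last xs = last ys"
    and "map l xs = map l ys"
  shows "xs = ys"
proof (rule ccontr)
  assume ne: "xs \<noteq> ys"
  from assms(1) have fV: "finite V" and EV: "E \<subseteq> V \<times> V" and fP: "finite Phi" and lP: "l ` V \<subseteq> Phi"
    unfolding weak_model_def by auto
  define a where "a = hd xs"
  define b where "b = last xs"
  have ys_ne: "ys \<noteq> []" using assms(6,7) by auto
  have aV: "a \<in> V" "b \<in> V" using assms(4,7) unfolding is_walk_def a_def b_def by auto
  obtain q where q: "q \<noteq> []" "hd q = b" "last q = a" "is_walk V E q"
    using path_exists[of b a E V] assms(2) aV EV unfolding strongly_connected_def by blast
  define D1 where "D1 = xs @ tl q"
  define D0 where "D0 = ys @ tl q"
  have lastD: "last (zs @ tl q) = a" if "zs \<noteq> []" "last zs = b" for zs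
  proof (cases "tl q = []")
    case True
    then have "q = [b]" using q by (metis list.collapse)
    then show ?thesis using that q by simp
  next
    case False then show ?thesis using q by (simp add: last_tl)
  qed
  have D: "is_walk V E D1" "is_walk V E D0" "D1 \<noteq> []" "D0 \<noteq> []"
    "hd D1 = a" "hd D0 = a" "last D1 = a" "last D0 = a"
  proof -
    show "is_walk V E D1" unfolding D1_def
      by (rule is_walk_glue[OF assms(4) q(4) assms(7) q(1)]) (simp add: q(2) b_def)
    show "is_walk V E D0" unfolding D0_def
      by (rule is_walk_glue[OF assms(5) q(4) ys_ne q(1)]) (simp add: q(2) b_def assms(9))
    show "D1 \<noteq> []" "D0 \<noteq> []" unfolding D1_def D0_def using assms(7) ys_ne by simp_all
    show "hd D1 = a" "hd D0 = a" unfolding D1_def D0_def a_def using assms(7) ys_ne assms(8) by simp_all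
    show "last D1 = a" unfolding D1_def by (rule lastD[OF assms(7)]) (simp add: b_def)
    show "last D0 = a" unfolding D0_def by (rule lastD[OF ys_ne]) (simp add: b_def assms(9))
  qed
  define W where "W = Wk D1 D0 a"
  have Wp: "\<And>bs. W bs \<noteq> [] \<and> hd (W bs) = a \<and> last (W bs) = a \<and> is_walk V E (W bs)"
    unfolding W_def using Wk_props[OF D aV(1)] by blast
  have t2: "length xs \<ge> 2"
  proof (rule ccontr)
    assume "\<not> length xs \<ge> 2"
    moreover have "length xs \<noteq> 0" using assms(7) by simp
    ultimately have "length xs = 1" by linarith
    then obtain x y where "xs = [x]" "ys = [y]" using assms(6)
      by (metis One_nat_def length_0_conv length_Suc_conv)
    then show False using ne assms(8) by simp
  qed
  define Ld where "Ld = length xs + length q - 2"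
  have lq: "length q > 0" using q(1) by simp
  have LD: "length D1 = Suc Ld" "length D0 = Suc Ld" "Ld > 0"
  proof -
    have "length D1 = length xs + (length q - 1)" "length D0 = length ys + (length q - 1)"
      unfolding D1_def D0_def by simp_all
    then show "length D1 = Suc Ld" "length D0 = Suc Ld" "Ld > 0"
      using t2 lq assms(6) unfolding Ld_def by linarith+
  qed
  have Wlen: "\<And>bs. length (W bs) = length bs * Ld + 1"
    unfolding W_def using Wk_length[OF LD(1,2)] Wp unfolding W_def by blast
  have Dmap: "map l D1 = map l D0" using assms(10) unfolding D1_def D0_def by simp
  have Dne: "D1 \<noteq> D0" using ne unfolding D1_def D0_def by simp
  have Winj: "\<And>bs cs. length bs = length cs \<Longrightarrow> W bs = W cs \<Longrightarrow> bs = cs"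
    unfolding W_def using Wk_inj[of D1 D0 a] LD Dne Wp unfolding W_def by auto
  have bound: "2 ^ k \<le> real (n_G V E l Phi (k * Ld + 1))" for k
  proof -
    define Y where "Y = map l (W (replicate k True))"
    have lenY: "length Y = k * Ld + 1" unfolding Y_def by (simp add: Wlen)
    have setY: "set Y \<subseteq> Phi" unfolding Y_def using Wp[of "replicate k True"] lP
      unfolding is_walk_def by auto
    have sub: "W ` {bs. set bs \<subseteq> UNIV \<and> length bs = k} \<subseteq> hypotheses V E l Y"
    proof
      fix w assume "w \<in> W ` {bs. set bs \<subseteq> UNIV \<and> length bs = k}"
      then obtain bs where bs: "length bs = k" "w = W bs" by auto
      have "map l (W bs) = Y" unfolding Y_def W_def using Wk_map[OF Dmap, of a bs] bs by simp
      moreover from this have "length (W bs) = length Y" by (metis length_map)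
      ultimately show "w \<in> hypotheses V E l Y" unfolding hypotheses_def using bs Wp[of bs]
        by simp
    qed
    have finH: "finite (hypotheses V E l Y)"
    proof (rule finite_subset)
      show "hypotheses V E l Y \<subseteq> {zs. set zs \<subseteq> V \<and> length zs = length Y}"
        unfolding hypotheses_def is_walk_def by auto
      show "finite {zs. set zs \<subseteq> V \<and> length zs = length Y}" using fV by (rule finite_lists_length_eq)
    qed
    have injW: "inj_on W {bs. set bs \<subseteq> UNIV \<and> length bs = k}"
      by (rule inj_onI) (use Winj in auto)
    have "card (W ` {bs. set bs \<subseteq> (UNIV::bool set) \<and> length bs = k}) = 2 ^ k"
      using card_image[OF injW] card_lists_length_eq[of "UNIV::bool set" k] by simp
    then have c1: "2 ^ k \<le> card (hypotheses V E l Y)" using card_mono[OF finH sub] by simp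
    have "card (hypotheses V E l Y) \<le> n_G V E l Phi (k * Ld + 1)"
      unfolding n_G_def
    proof (rule Max_ge)
      show "finite ((\<lambda>Y. card (hypotheses V E l Y)) ` {Y. set Y \<subseteq> Phi \<and> length Y = k * Ld + 1})"
        using finite_lists_length_eq[OF fP] by simp
      show "card (hypotheses V E l Y) \<in> (\<lambda>Y. card (hypotheses V E l Y)) ` {Y. set Y \<subseteq> Phi \<and> length Y = k * Ld + 1}"
        using setY lenY by auto
    qed
    then have "2 ^ k \<le> n_G V E l Phi (k * Ld + 1)" using c1 by simp
    then show ?thesis by (metis of_nat_le_iff of_nat_numeral of_nat_power)
  qed
  obtain d :: nat where "(\<lambda>t. real (n_G V E l Phi t)) \<in> O(\<lambda>t. real t ^ d)"
    using assms(3) unfolding trackable_def by blast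
  from exp_beats_poly[OF this LD(3)] bound show False by blast
qed

end
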